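(* Let $G=(A\cup B,E)$ be a bipartite graph with $A=\{a_1,\dots,a_r\}$ and $B=\{b_1,\dots,b_s\}$. For each edge $(a_i,b_j)\in E$ let $L_{ij}$ be the L-frame with corner $(-i,-j)$ whose vertical segment joins $(-i,-j)$ to $(-i,0)$ and whose horizontal segment joins $(-i,-j)$ to $(0,-j)$. Let $G'$ be the graph on these L-frames in the edge intersection model. Then for every $k$, $G$ has an edge dominating set of size $k$ if and only if $G'$ has a dominating set of size $k$.
   Context: An L-frame is the union of a horizontal and a vertical segment sharing an endpoint (the corner). Edge intersection model: L-frames drawn on the integer grid are adjacent iff they share at least one grid edge. An edge dominating set of a graph is a set $S$ of edges such that every edge not in $S$ shares an endpoint with some edge of $S$. A dominating set is a vertex set such that every vertex outside it has a neighbour in it. *)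

theory Defs
  imports Main
begin

text \<open>Bipartite graph G with parts A = {a_1..a_r}, B = {b_1..b_s}.
  The vertex a_i is Inl i, the vertex b_j is Inr j; an edge (a_i,b_j) is
  represented by the pair (i,j).\<close>

definition endpoints :: "nat \<times> nat \<Rightarrow> (nat + nat) set" where
  "endpoints e = {Inl (fst e), Inr (snd e)}"

definition edge_dominating_set :: "(nat \<times> nat) set \<Rightarrow> (nat \<times> nat) set \<Rightarrow> bool" where
  "edge_dominating_set E S \<longleftrightarrow> S \<subseteq> E \<and>
     (\<forall>e \<in> E - S. \<exists>f \<in> S. endpoints e \<inter> endpoints f \<noteq> {})"

text \<open>A grid edge (unit segment of the integer grid) is represented by the set
  of its two endpoints.\<close>

type_synonym grid_edge = "(int \<times> int) set"

definition hseg :: "int \<Rightarrow> int \<Rightarrow> grid_edge" where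
  "hseg x y = {(x, y), (x + 1, y)}"

definition vseg :: "int \<Rightarrow> int \<Rightarrow> grid_edge" where
  "vseg x y = {(x, y), (x, y + 1)}"

definition Lframe :: "nat \<Rightarrow> nat \<Rightarrow> grid_edge set" where
  "Lframe i j =
     {vseg (- int i) y | y. - int j \<le> y \<and> y < 0} \<union>
     {hseg x (- int j) | x. - int i \<le> x \<and> x < 0}"

definition EPG_adj :: "grid_edge set \<Rightarrow> grid_edge set \<Rightarrow> bool" where
  "EPG_adj L M \<longleftrightarrow> L \<noteq> M \<and> L \<inter> M \<noteq> {}"

definition dominating_set :: "'v set \<Rightarrow> ('v \<Rightarrow> 'v \<Rightarrow> bool) \<Rightarrow> 'v set \<Rightarrow> bool" where
  "dominating_set V adj D \<longleftrightarrow> D \<subseteq> V \<and> (\<forall>v \<in> V - D. \<exists>u \<in> D. adj u v)"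

end

theory Submission
  imports Defs
begin

lemma seg_eqs:
  "vseg a b = vseg c d \<longleftrightarrow> a = c \<and> b = d"
  "hseg a b = hseg c d \<longleftrightarrow> a = c \<and> b = d"
  "vseg a b \<noteq> hseg c d"
  by (auto simp: vseg_def hseg_def doubleton_eq_iff)

lemma Lf_inj:
  assumes "i \<ge> 1" "j \<ge> 1" "i' \<ge> 1" "j' \<ge> 1" "Lframe i j = Lframe i' j'"
  shows "i = i' \<and> j = j'"
proof -
  have "vseg (- int i) (-1) \<in> Lframe i j" using assms(1-4) unfolding Lframe_def by auto
  hence "vseg (- int i) (-1) \<in> Lframe i' j'" using assms by simp
  hence 1: "i = i'" unfolding Lframe_def by (auto simp: seg_eqs)
  have "hseg (-1) (- int j) \<in> Lframe i j" using assms(1-4) unfolding Lframe_def by auto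
  hence "hseg (-1) (- int j) \<in> Lframe i' j'" using assms by simp
  hence 2: "j = j'" unfolding Lframe_def by (auto simp: seg_eqs dest: sym)
  show ?thesis using 1 2 by simp
qed

lemma Lf_meet:
  assumes "i \<ge> 1" "j \<ge> 1" "i' \<ge> 1" "j' \<ge> 1"
  shows "Lframe i j \<inter> Lframe i' j' \<noteq> {} \<longleftrightarrow> i = i' \<or> j = j'"
proof
  assume "Lframe i j \<inter> Lframe i' j' \<noteq> {}"
  then obtain g where "g \<in> Lframe i j" "g \<in> Lframe i' j'" by blast
  thus "i = i' \<or> j = j'" unfolding Lframe_def by (auto simp: seg_eqs dest: sym)
next
  assume "i = i' \<or> j = j'"
  thus "Lframe i j \<inter> Lframe i' j' \<noteq> {}"
  proof
    assume "i = i'"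
    hence "vseg (- int i) (-1) \<in> Lframe i j \<inter> Lframe i' j'" using assms(1-4) unfolding Lframe_def by auto
    thus ?thesis by blast
  next
    assume "j = j'"
    hence "hseg (-1) (- int j) \<in> Lframe i j \<inter> Lframe i' j'" using assms(1-4) unfolding Lframe_def by auto
    thus ?thesis by blast
  qed
qed

lemma endp: "endpoints e \<inter> endpoints f \<noteq> {} \<longleftrightarrow> fst e = fst f \<or> snd e = snd f"
  by (auto simp: endpoints_def)

theorem mainTheorem14:
  fixes r s k :: nat and E :: "(nat \<times> nat) set"
  assumes "E \<subseteq> {1..r} \<times> {1..s}"
  shows "(\<exists>S. edge_dominating_set E S \<and> card S = k) \<longleftrightarrow>
         (\<exists>D. dominating_set ((\<lambda>(i, j). Lframe i j) ` E) EPG_adj D \<and> card D = k)"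
proof -
  define F where "F = (\<lambda>(i::nat, j::nat). Lframe i j)"
  have pos: "e \<in> E \<Longrightarrow> fst e \<ge> 1 \<and> snd e \<ge> 1" for e using assms by auto
  have inj: "inj_on F E"
  proof (rule inj_onI)
    fix e f assume "e \<in> E" "f \<in> E" "F e = F f"
    thus "e = f" using Lf_inj[of "fst e" "snd e" "fst f" "snd f"] pos
      by (cases e, cases f) (auto simp: F_def)
  qed
  have adj: "e \<in> E \<Longrightarrow> f \<in> E \<Longrightarrow> EPG_adj (F f) (F e) \<longleftrightarrow> e \<noteq> f \<and> endpoints e \<inter> endpoints f \<noteq> {}"
    for e f
  proof -
    assume e: "e \<in> E" and f: "f \<in> E"
    have "F f \<noteq> F e \<longleftrightarrow> e \<noteq> f" using inj e f by (auto dest: inj_onD)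
    moreover have "F f \<inter> F e \<noteq> {} \<longleftrightarrow> endpoints e \<inter> endpoints f \<noteq> {}"
      using Lf_meet[of "fst f" "snd f" "fst e" "snd e"] pos[OF e] pos[OF f]
      by (cases e, cases f) (auto simp: F_def endp)
    ultimately show ?thesis unfolding EPG_adj_def by blast
  qed
  show ?thesis unfolding F_def[symmetric]
  proof
    assume "\<exists>S. edge_dominating_set E S \<and> card S = k"
    then obtain S where S: "edge_dominating_set E S" "card S = k" by blast
    have sub: "S \<subseteq> E" using S unfolding edge_dominating_set_def by blast
    have "dominating_set (F ` E) EPG_adj (F ` S)"
      unfolding dominating_set_def
    proof (intro conjI ballI)
      show "F ` S \<subseteq> F ` E" using sub by blast
    next
      fix v assume "v \<in> F ` E - F ` S"
      then obtain e where e: "e \<in> E" "e \<notin> S" "v = F e" by blast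
      then obtain f where f: "f \<in> S" "endpoints e \<inter> endpoints f \<noteq> {}"
        using S unfolding edge_dominating_set_def by blast
      have "EPG_adj (F f) (F e)" using adj[of e f] e f sub by auto
      thus "\<exists>u\<in>F ` S. EPG_adj u v" using f e by blast
    qed
    moreover have "card (F ` S) = k" using S sub card_image inj_on_subset[OF inj sub] by metis
    ultimately show "\<exists>D. dominating_set (F ` E) EPG_adj D \<and> card D = k" by blast
  next
    assume "\<exists>D. dominating_set (F ` E) EPG_adj D \<and> card D = k"
    then obtain D where D: "dominating_set (F ` E) EPG_adj D" "card D = k" by blast
    define S where "S = {e \<in> E. F e \<in> D}"
    have sub: "S \<subseteq> E" unfolding S_def by blast
    have img: "F ` S = D" using D unfolding S_def dominating_set_def by blast
    have "edge_dominating_set E S"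
      unfolding edge_dominating_set_def
    proof (intro conjI ballI)
      show "S \<subseteq> E" by (rule sub)
    next
      fix e assume e: "e \<in> E - S"
      hence "F e \<in> F ` E - D" unfolding S_def by auto
      then obtain u where u: "u \<in> D" "EPG_adj u (F e)" using D unfolding dominating_set_def by blast
      then obtain f where f: "f \<in> S" "u = F f" using img by blast
      thus "\<exists>f\<in>S. endpoints e \<inter> endpoints f \<noteq> {}" using adj[of e f] e sub u by auto
    qed
    moreover have "card S = k" using D img card_image inj_on_subset[OF inj sub] by metis
    ultimately show "\<exists>S. edge_dominating_set E S \<and> card S = k" by blast
  qed
qed

end
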